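(* Let $s\ge3$ be an integer, $\psi_s(z):=z^{s-1}(z+s)-(s-1)^{s-1}$, and let $\alpha$ be a nontrivial root of $\psi_s$ of degree $d$ as an algebraic number, with conjugates $\beta_1,\dots,\beta_d$ (including $\alpha$). Put $M:=\prod_{j=1}^d(s+\beta_j)$ and $N:=\prod_{j=1}^d\beta_j$ (both rational integers). Then there is an integer $n$ with $|n|\ge2$, $n\mid(s-1)$, $M=n^{s-1}$ and $nN=(s-1)^d$.
   Context: When $s$ is odd, $z=1-s$ is a double root of $\psi_s$, called trivial; all other roots are nontrivial. When $s$ is even all roots are nontrivial. *)

theory Defs
  imports "HOL-Computational_Algebra.Polynomial" Complex_Main
begin

definition psi :: "nat \<Rightarrow> complex \<Rightarrow> complex" where
  "psi s z = z ^ (s - 1) * (z + of_nat s) - (of_nat s - 1) ^ (s - 1)"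

text \<open>Trivial root: for odd s, z = 1 - s (a double root). For even s no root is trivial.\<close>
definition trivial_root :: "nat \<Rightarrow> complex \<Rightarrow> bool" where
  "trivial_root s z \<longleftrightarrow> odd s \<and> z = 1 - of_nat s"

definition is_min_poly :: "complex \<Rightarrow> rat poly \<Rightarrow> bool" where
  "is_min_poly \<alpha> p \<longleftrightarrow> p \<noteq> 0 \<and> lead_coeff p = 1 \<and> poly (map_poly of_rat p) \<alpha> = 0 \<and>
     (\<forall>q. q \<noteq> 0 \<and> poly (map_poly of_rat q) \<alpha> = 0 \<longrightarrow> degree p \<le> degree q)"

definition min_poly :: "complex \<Rightarrow> rat poly" where
  "min_poly \<alpha> = (THE p. is_min_poly \<alpha> p)"

definition alg_degree :: "complex \<Rightarrow> nat" where
  "alg_degree \<alpha> = degree (min_poly \<alpha>)"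

definition conjugates :: "complex \<Rightarrow> complex set" where
  "conjugates \<alpha> = {\<beta>. poly (map_poly of_rat (min_poly \<alpha>)) \<beta> = 0}"

end

theory Submission
  imports Defs "Berlekamp_Zassenhaus.Factor_Bound"
begin


lemma re1_norm_le1: fixes z :: complex assumes "Re z = 1" "norm z \<le> 1" shows "z = 1"
proof -
  have "norm z ^ 2 = Re z ^ 2 + Im z ^ 2" by (simp add: cmod_power2)
  moreover have "norm z ^ 2 \<le> 1" using assms(2) by (simp add: power_le_one)
  ultimately have "Im z ^ 2 \<le> 0" using assms(1) by simp
  hence "Im z ^ 2 = 0" using zero_le_power2[of "Im z"] by linarith
  hence "Im z = 0" by simp
  thus ?thesis using assms by (simp add: complex_eq_iff)
qed

lemma disk_root_unique:
  fixes a b c :: complex and s :: nat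
  assumes s2: "s \<ge> 2" and ea: "a^s = of_nat s * a + c" and eb: "b^s = of_nat s * b + c"
    and na: "norm a \<le> 1" and nb: "norm b \<le> 1"
  shows "a = b"
proof (rule ccontr)
  assume ne: "a \<noteq> b"
  define SS where "SS = (sum (\<lambda>i. b^(s - Suc i) * a^i) {..<s})"
  have "a^s - b^s = (a - b) * SS" unfolding SS_def by (rule power_diff_sumr2)
  also have "a^s - b^s = (a - b) * of_nat s" using ea eb by (simp add: algebra_simps)
  finally have "SS = of_nat s" using ne by simp
  hence "Re SS = real s" by simp
  hence ReS: "(sum (\<lambda>i. Re (b^(s - Suc i) * a^i)) {..<s}) = real s" unfolding SS_def by (simp only: Re_sum)
  have tn: "norm (b^(s - Suc i) * a^i) \<le> 1" for i
    by (simp add: norm_mult norm_power) (meson mult_le_one na nb norm_ge_zero power_le_one zero_le_power)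
  have "(sum (\<lambda>i. 1 - Re (b^(s - Suc i) * a^i)) {..<s}) = 0" using ReS by (simp add: sum_subtractf)
  moreover have "\<forall>i\<in>{..<s}. 0 \<le> 1 - Re (b^(s - Suc i) * a^i)"
    using tn complex_Re_le_cmod by (smt (verit))
  ultimately have "\<forall>i\<in>{..<s}. 1 - Re (b^(s - Suc i) * a^i) = 0"
    by (subst (asm) sum_nonneg_eq_0_iff) auto
  hence one: "\<And>i. i < s \<Longrightarrow> b^(s - Suc i) * a^i = 1" using tn re1_norm_le1 by force
  have e0: "b^(s - 1) = 1" using one[of 0] s2 by simp
  have e1: "b^(s - 2) * a = 1" using one[of 1] s2 by (simp add: numeral_2_eq_2)
  have "b^(s-1) = b^(s-2) * b" using s2 by (metis Suc_diff_Suc Suc_1 diff_Suc_1 le_eq_less_or_eq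
        less_eq_Suc_le mult.commute numeral_2_eq_2 power_Suc zero_less_Suc)
  hence "b^(s-2) * a = b^(s-2) * b" using e0 e1 by simp
  moreover have "b^(s-2) \<noteq> 0" using e1 by (metis mult_zero_left zero_neq_one)
  ultimately show False using ne by simp
qed

lemma numeric_bound:
  fixes t :: nat and a :: real
  assumes t3: "t \<ge> 3" and odd: "odd t" and a0: "0 < a" and a1: "a \<le> 1"
    and ea: "a^(t+1) = real t - real (t+1) * a"
  shows "2 < (real t ^ 2 - 2) * a^t"
proof -
  have "a^(t+1) \<le> 1" using a0 a1 by (intro power_le_one) auto
  hence alow: "a \<ge> (real t - 1) / (real t + 1)" using ea by (simp add: field_simps)
  have "t = 3 \<or> t = 5 \<or> t = 7 \<or> t \<ge> 9" using t3 odd by presburger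
  then consider "t = 3" | "t = 5" | "t = 7" | "t \<ge> 9" by blast
  thus ?thesis
  proof cases
    case 1
    have e4: "a^4 = 3 - 4 * a" using ea 1 by simp
    have "a^4 > 0" using a0 by simp
    hence "a < 3/4" using e4 by linarith
    hence "a^4 \<le> (3/4)^4" using a0 by (intro power_mono) auto
    hence "3 - 4 * a \<le> 81/256" using e4 by (simp add: power_divide)
    hence "a \<ge> 687/1024" by linarith
    hence "a^3 \<ge> (687/1024)^3" by (intro power_mono) auto
    hence "a^3 \<ge> 324242703/1073741824" by (simp add: power_divide)
    thus ?thesis using 1 by simp
  next
    case 2
    hence "a \<ge> 2/3" using alow by simp
    hence "a^5 \<ge> (2/3)^5" by (intro power_mono) auto
    hence "a^5 \<ge> 32/243" by (simp add: power_divide)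
    thus ?thesis using 2 by simp
  next
    case 3
    hence "a \<ge> 3/4" using alow by simp
    hence "a^7 \<ge> (3/4)^7" by (intro power_mono) auto
    hence "a^7 \<ge> 2187/16384" by (simp add: power_divide)
    thus ?thesis using 3 by simp
  next
    case 4
    define y where "y = 2 / (real t - 1)"
    have tpos: "real t - 1 > 0" using t3 by simp
    have "1 / a \<le> (real t + 1) / (real t - 1)" using alow a0 tpos
      by (simp add: field_simps)
    also have "\<dots> = 1 + y" unfolding y_def using tpos by (simp add: field_simps)
    also have "\<dots> \<le> exp y" by (rule exp_ge_add_one_self)
    finally have b1: "1 / a \<le> exp y" .
    have "(1/a)^t \<le> (exp y)^t" using b1 a0 by (intro power_mono) auto
    also have "\<dots> = exp (real t * y)" by (simp add: exp_of_nat_mult)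
    also have "\<dots> \<le> exp 3"
    proof -
      have "real t * y \<le> 3" unfolding y_def using tpos t3 by (simp add: field_simps)
      thus ?thesis by simp
    qed
    also have "exp (3::real) = exp 1 ^ 3" by (simp add: exp_of_nat_mult[symmetric])
    also have "\<dots> \<le> 3^3" using exp_le by (intro power_mono) auto
    finally have "(1/a)^t \<le> 27" by simp
    hence at: "a^t \<ge> 1/27" using a0 by (simp add: power_one_over field_simps)
    have "real t \<ge> 9" using 4 by simp
    hence "real t ^ 2 \<ge> 9^2" by (intro power_mono) auto
    hence "real t ^ 2 \<ge> 81" by simp
    hence "(real t ^ 2 - 2) * a^t \<ge> 79 * (1/27)" using at
      by (intro mult_mono) auto
    thus ?thesis by simp
  qed
qed

lemma prod_gt1:
  fixes f :: "'a \<Rightarrow> real"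
  assumes "finite A" "A \<noteq> {}" "\<forall>x\<in>A. f x > 1"
  shows "prod f A > 1"
  using assms
proof (induction A rule: finite_ne_induct)
  case (singleton x) thus ?case by simp
next
  case (insert x F)
  hence "f x > 1" "prod f F > 1" by auto
  thus ?case using insert by (simp add: less_1_mult)
qed

lemma no_unit:
  fixes U :: "complex set" and s :: nat
  assumes s3: "s \<ge> 3" and fin: "finite U" and ne: "U \<noteq> {}"
    and root: "\<And>u. u \<in> U \<Longrightarrow> u^s = of_nat s * u + of_nat (s-1)"
    and nm1: "-1 \<notin> U"
    and p1: "norm (\<Prod>u\<in>U. u) = 1"
    and p2: "norm (\<Prod>u\<in>U. 1 + u) \<ge> 1"
  shows False
proof -
  define t where "t = s - 1"
  have st: "s = t + 1" using s3 t_def by simp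
  have t2: "t \<ge> 2" using s3 t_def by simp
  have pn: "(\<Prod>u\<in>U. norm u) = 1" using p1 by (simp add: prod_norm)
  show False
  proof (cases "\<forall>u\<in>U. norm u > 1")
    case True
    hence "(\<Prod>u\<in>U. norm u) > 1" by (intro prod_gt1[OF fin ne])
    thus False using pn by simp
  next
    case False
    then obtain u0 where u0U: "u0 \<in> U" and u0n: "norm u0 \<le> 1" by force
    have uniq: "v = u0" if "v \<in> U" "norm v \<le> 1" for v
      using disk_root_unique[of s v "of_nat (s-1)" u0] root[OF that(1)] root[OF u0U] that u0n s3
      by simp
    show False
    proof (cases "even s")
      case False
      have "(-1::complex)^s = of_nat s * (-1) + of_nat (s-1)" using False s3 by (simp add: of_nat_diff)
      then have "-1 = u0" using disk_root_unique[of s "-1" "of_nat (s-1)" u0] root[OF u0U] u0n s3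
        by simp
      thus False using nm1 u0U by simp
    next
      case True
      have "cnj u0 ^ s = of_nat s * cnj u0 + of_nat (s-1)"
        using arg_cong[OF root[OF u0U], of cnj] by simp
      then have "cnj u0 = u0" using disk_root_unique[of s "cnj u0" "of_nat (s-1)" u0] root[OF u0U] u0n s3
        by simp
      hence im: "Im u0 = 0" by (simp add: complex_eq_iff)
      define x where "x = Re u0"
      have u0x: "u0 = of_real x" using im by (simp add: complex_eq_iff x_def)
      have "of_real (x^s) = (of_real (real s * x + real (s-1)) :: complex)"
        using root[OF u0U] unfolding u0x by simp
      hence ex: "x^s = real s * x + real (s-1)" using of_real_eq_iff by blast
      have xabs: "\<bar>x\<bar> \<le> 1" using u0n u0x by simp
      have "\<bar>x\<bar>^s \<le> 1" using xabs by (intro power_le_one) auto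
      hence xs1: "x^s \<le> 1" by (metis abs_ge_self order.trans power_abs)
      have xneg: "x < 0"
      proof (rule ccontr)
        assume "\<not> x < 0"
        hence "real s * x \<ge> 0" by simp
        hence "x^s \<ge> real (s-1)" using ex by simp
        thus False using xs1 t2 t_def by simp
      qed
      define a where "a = -x"
      have a0: "a > 0" using xneg a_def by simp
      have a1: "a \<le> 1" using xabs xneg a_def by simp
      have "a^s = x^s" unfolding a_def using True by simp
      hence ea: "a^(t+1) = real t - real (t+1) * a" using ex st unfolding a_def by simp
      have na: "norm u0 = a" using u0x xneg a_def by simp
      define V where "V = U - {u0}"
      have finV: "finite V" using fin V_def by simp
      have Vgt: "\<forall>v\<in>V. norm v > 1" using uniq V_def by force
      have pU: "(\<Prod>u\<in>U. f u) = f u0 * (\<Prod>v\<in>V. f v)" for f :: "complex \<Rightarrow> real"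
        unfolding V_def by (rule prod.remove[OF fin u0U])
      have pVn: "(\<Prod>v\<in>V. norm v) = 1/a" using pn pU[of norm] na a0 by (simp add: field_simps)
      define d where "d = card U"
      have cardV: "card V = d - 1" unfolding V_def d_def using u0U fin by simp
      have Vne: "V \<noteq> {}"
      proof
        assume "V = {}"
        hence "a = 1" using pVn a0 by (simp add: field_simps)
        thus False using ea by simp
      qed
      have d2: "d \<ge> 2"
      proof -
        have "card V \<ge> 1" using Vne finV by (simp add: Suc_leI card_gt_0_iff)
        thus ?thesis using cardV by simp
      qed
      have ident: "u * (u^t - 1) = of_nat t * (1 + u)" if "u \<in> U" for u
      proof -
        have e: "u * u^t = (of_nat t + 1) * u + of_nat t" using root[OF that] st by simp
        have "u * (u^t - 1) = u * u^t - u" by (simp add: right_diff_distrib)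
        also have "\<dots> = (of_nat t + 1) * u + of_nat t - u" using e by simp
        also have "\<dots> = of_nat t * (1 + u)" by (simp add: distrib_left distrib_right)
        finally show ?thesis .
      qed
      have "(\<Prod>u\<in>U. u) * (\<Prod>u\<in>U. u^t - 1) = (\<Prod>u\<in>U. u * (u^t - 1))"
        by (simp add: prod.distrib)
      also have "\<dots> = (\<Prod>u\<in>U. of_nat t * (1 + u))" using ident by (intro prod.cong) auto
      also have "\<dots> = of_nat t ^ d * (\<Prod>u\<in>U. 1 + u)" by (simp add: prod.distrib d_def)
      finally have "norm ((\<Prod>u\<in>U. u) * (\<Prod>u\<in>U. u^t - 1)) = norm (of_nat t ^ d * (\<Prod>u\<in>U. 1 + u) :: complex)"
        by simp
      hence "(\<Prod>u\<in>U. norm (u^t - 1)) = real t ^ d * norm (\<Prod>u\<in>U. 1 + u)"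
        using p1 by (simp add: norm_mult norm_power prod_norm)
      hence low: "(\<Prod>u\<in>U. norm (u^t - 1)) \<ge> real t ^ d" using p2
        by (metis mult_left_mono mult.right_neutral of_nat_0_le_iff zero_le_power)
      have "(\<Prod>v\<in>V. norm (v^t - 1)) \<le> (\<Prod>v\<in>V. 2 * norm v ^ t)"
      proof (intro prod_mono conjI)
        fix v assume "v \<in> V"
        hence nv: "norm v > 1" using Vgt by auto
        have "norm (v^t - 1) \<le> norm (v^t) + norm (1::complex)" by (rule norm_triangle_ineq4)
        also have "\<dots> = norm v ^ t + 1" by (simp add: norm_power)
        also have "\<dots> \<le> 2 * norm v ^ t" using nv by (simp add: one_le_power)
        finally show "norm (v^t - 1) \<le> 2 * norm v ^ t" .
      qed simp
      also have "\<dots> = 2 ^ (d - 1) * (1/a)^t"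
        using pVn cardV by (simp add: prod.distrib prod_power_distrib[symmetric])
      finally have upV: "(\<Prod>v\<in>V. norm (v^t - 1)) \<le> 2 ^ (d - 1) * (1/a)^t" .
      have "norm (u0^t - 1) \<le> norm (u0^t) + norm (1::complex)" by (rule norm_triangle_ineq4)
      hence up0: "norm (u0^t - 1) \<le> a^t + 1" using na by (simp add: norm_power)
      have "(\<Prod>u\<in>U. norm (u^t - 1)) = norm (u0^t - 1) * (\<Prod>v\<in>V. norm (v^t - 1))"
        by (rule pU)
      also have "\<dots> \<le> (a^t + 1) * (2 ^ (d - 1) * (1/a)^t)"
        using up0 upV a0 by (intro mult_mono) (auto intro: prod_nonneg)
      finally have "real t ^ d \<le> (a^t + 1) * (2 ^ (d - 1) * (1/a)^t)" using low by simp
      hence "real t ^ d * a^t \<le> (a^t + 1) * (2 ^ (d - 1) * (1/a)^t) * a^t"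
        using a0 by (intro mult_right_mono) auto
      also have "\<dots> = (a^t + 1) * 2 ^ (d - 1) * ((1/a)^t * a^t)" by (simp only: mult_ac)
      also have "(1/a)^t * a^t = 1" using a0 by (simp add: power_one_over)
      finally have "real t ^ d * a^t \<le> (a^t + 1) * 2 ^ (d - 1)" by simp
      moreover have "real t ^ d \<ge> real t ^ 2 * 2 ^ (d - 2)"
      proof -
        have "real t ^ d = real t ^ 2 * real t ^ (d - 2)" using d2
          by (metis le_add_diff_inverse power_add)
        moreover have "real t ^ (d - 2) \<ge> 2 ^ (d - 2)" using t2 by (intro power_mono) auto
        ultimately show ?thesis by (simp add: mult_left_mono)
      qed
      ultimately have "real t ^ 2 * 2 ^ (d - 2) * a^t \<le> (a^t + 1) * 2 ^ (d - 1)"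
        using a0 by (smt (verit) mult_right_mono zero_le_power)
      moreover have "(2::real) ^ (d - 1) = 2 * 2 ^ (d - 2)" using d2
        by (metis Suc_diff_Suc Suc_1 less_le_trans numeral_2_eq_2 power_Suc lessI Suc_le_lessD)
      ultimately have "real t ^ 2 * a^t \<le> 2 * (a^t + 1)" by simp
      moreover have "2 < (real t ^ 2 - 2) * a^t"
        using numeric_bound[of t a] t2 True st a0 a1 ea
        by (smt (verit, ccfv_threshold) add_diff_cancel_left' dvd_add_triv_right_iff
            even_add le_eq_less_or_eq numeral_2_eq_2 numeral_3_eq_3 odd_one Suc_leI)
      ultimately show False by (simp add: algebra_simps)
    qed
  qed
qed

lemma root_step:
  fixes u T b :: complex and s t :: nat
  assumes u: "u = T/b" and sb: "of_nat s + b = (T/b)^t" and st: "s = t + 1" and b0: "b \<noteq> 0"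
  shows "u^s = of_nat s * u + T"
proof -
  have "u^s = u * u^t" unfolding st by (metis power_Suc Suc_eq_plus1)
  also have "\<dots> = (T/b) * (of_nat s + b)" unfolding u by (simp only: sb)
  also have "\<dots> = (T/b) * of_nat s + (T/b) * b" by (rule distrib_left)
  also have "(T/b) * b = T" using b0 by simp
  also have "(T/b) * of_nat s = of_nat s * u" unfolding u by (rule mult.commute)
  finally show ?thesis .
qed



interpretation of_rat_poly_hom: map_poly_idom_hom "of_rat :: rat \<Rightarrow> complex" ..

abbreviation E :: "rat poly \<Rightarrow> complex \<Rightarrow> complex" where
  "E q z \<equiv> poly (map_poly of_rat q) z"

lemma E_mult: "E (p * q) z = E p z * E q z" by (simp add: hom_distribs)
lemma E_add: "E (p + q) z = E p z + E q z" by (simp add: hom_distribs)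
lemma E_diff: "E (p - q) z = E p z - E q z" by (simp add: hom_distribs)
lemma E_smult: "E (Polynomial.smult c p) z = of_rat c * E p z" by (simp add: hom_distribs)
lemma E_const: "E [:c:] z = of_rat c" by (simp add: hom_distribs)

lemma E_nonconst: assumes "q \<noteq> 0" "E q z = 0" shows "degree q \<ge> 1"
proof (rule ccontr)
  assume "\<not> degree q \<ge> 1"
  hence "degree q = 0" by simp
  then obtain c where "q = [:c:]" by (metis degree_eq_zeroE)
  thus False using assms by simp
qed

lemma min_poly_unique:
  assumes "is_min_poly a p" "is_min_poly a p'" shows "p = p'"
proof (rule ccontr)
  assume ne: "p \<noteq> p'"
  have dp: "degree p = degree p'" using assms unfolding is_min_poly_def by (meson le_antisym)
  define r where "r = p - p'"
  have r0: "r \<noteq> 0" using ne r_def by simp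
  have "E r a = 0" using assms unfolding is_min_poly_def r_def by (simp add: E_diff)
  hence ge: "degree r \<ge> degree p" using assms r0 unfolding is_min_poly_def by blast
  have le: "degree r \<le> degree p" unfolding r_def using dp by (simp add: degree_diff_le)
  have "Polynomial.coeff r (degree p) = 0" unfolding r_def using assms dp unfolding is_min_poly_def by simp
  hence "lead_coeff r = 0" using ge le by simp
  thus False using r0 by simp
qed

lemma min_poly_exists:
  assumes "q \<noteq> 0" "E q a = 0" shows "is_min_poly a (min_poly a)"
proof -
  define P where "P = (\<lambda>n. \<exists>q. q \<noteq> 0 \<and> E q a = 0 \<and> degree q = n)"
  have "P (degree q)" using assms P_def by blast
  hence "P (LEAST n. P n)" by (rule LeastI)
  then obtain q0 where q0: "q0 \<noteq> 0" "E q0 a = 0" "degree q0 = (LEAST n. P n)" unfolding P_def by blast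
  define p0 where "p0 = Polynomial.smult (inverse (lead_coeff q0)) q0"
  have lc: "lead_coeff q0 \<noteq> 0" using q0(1) by simp
  have mp: "is_min_poly a p0" unfolding is_min_poly_def
  proof (intro conjI allI impI)
    show "p0 \<noteq> 0" using q0 lc p0_def by simp
    show "lead_coeff p0 = 1" using lc p0_def by (simp add: lead_coeff_smult)
    show "E p0 a = 0" using q0 p0_def by (simp add: E_smult)
    fix q assume "q \<noteq> 0 \<and> E q a = 0"
    hence "P (degree q)" unfolding P_def by blast
    hence "(LEAST n. P n) \<le> degree q" by (rule Least_le)
    moreover have "degree p0 = degree q0" using lc p0_def by simp
    ultimately show "degree p0 \<le> degree q" using q0(3) by simp
  qed
  have "min_poly a = p0" unfolding min_poly_def
    using mp min_poly_unique by blast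
  thus ?thesis using mp by simp
qed

lemma min_poly_dvd:
  assumes mp: "is_min_poly a p" and q: "E q a = 0" shows "p dvd q"
proof -
  have p0: "p \<noteq> 0" using mp unfolding is_min_poly_def by simp
  have "q mod p = q - (q div p) * p" by (simp add: mod_div_mult_eq minus_div_mult_eq_mod)
  hence "E (q mod p) a = 0" using q mp unfolding is_min_poly_def by (simp add: E_diff E_mult)
  moreover have "q mod p = 0 \<or> degree (q mod p) < degree p" using degree_mod_less[OF p0] by blast
  ultimately have "q mod p = 0" using mp unfolding is_min_poly_def by (meson not_le)
  thus ?thesis by (simp add: mod_0_imp_dvd)
qed

lemma conj_min_degree:
  assumes mp: "is_min_poly a p" and b: "E p b = 0"
  shows "m \<noteq> 0 \<Longrightarrow> E m b = 0 \<Longrightarrow> degree m \<ge> degree p"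
proof (induction "degree m" arbitrary: m rule: less_induct)
  case less
  show ?case
  proof (rule ccontr)
    assume lt: "\<not> degree m \<ge> degree p"
    have p0: "p \<noteq> 0" using mp unfolding is_min_poly_def by simp
    have "p mod m = p - (p div m) * m" by (simp add: minus_div_mult_eq_mod)
    hence "E (p mod m) b = 0" using b less by (simp add: E_diff E_mult)
    moreover have "p mod m = 0 \<or> degree (p mod m) < degree m" using degree_mod_less[OF less(2)] by blast
    ultimately have "p mod m = 0"
    proof -
      assume e: "E (p mod m) b = 0" and o: "p mod m = 0 \<or> degree (p mod m) < degree m"
      show "p mod m = 0"
      proof (rule ccontr)
        assume nz: "p mod m \<noteq> 0"
        hence dl: "degree (p mod m) < degree m" using o by blast
        have "degree (p mod m) \<ge> degree p" using less(1)[OF dl nz e] .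
        thus False using dl lt by simp
      qed
    qed
    then obtain c where pc: "p = m * c" by (metis dvd_def mod_0_imp_dvd)
    have c0: "c \<noteq> 0" using pc p0 by auto
    have dpc: "degree p = degree m + degree c" using pc c0 less(2) by (simp add: degree_mult_eq)
    have "E m a * E c a = 0" using mp pc unfolding is_min_poly_def by (simp add: E_mult)
    moreover have "E m a \<noteq> 0" using mp less(2) lt unfolding is_min_poly_def by auto
    ultimately have "E c a = 0" by simp
    hence "degree c \<ge> degree p" using mp c0 unfolding is_min_poly_def by blast
    moreover have "degree m \<ge> 1" using E_nonconst less(2,3) by blast
    ultimately show False using dpc by simp
  qed
qed

lemma min_poly_rsquarefree:
  assumes mp: "is_min_poly a p"
  shows "rsquarefree (map_poly (of_rat :: rat \<Rightarrow> complex) p)"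
  unfolding rsquarefree_roots
proof (intro allI notI)
  fix b :: complex assume h: "poly (map_poly of_rat p) b = 0 \<and> poly (pderiv (map_poly of_rat p)) b = 0"
  have p0: "p \<noteq> 0" and pa: "E p a = 0" using mp unfolding is_min_poly_def by auto
  have d1: "degree p \<ge> 1" using E_nonconst[OF p0 pa] .
  have "pderiv p \<noteq> 0" using d1 by (simp add: pderiv_eq_0_iff)
  moreover have "E (pderiv p) b = 0" using h by (simp add: hom_distribs)
  ultimately have "degree (pderiv p) \<ge> degree p" using conj_min_degree[OF mp] h by blast
  thus False using d1 by (simp add: degree_pderiv)
qed

lemma monic_factor_int:
  fixes g k :: "rat poly" and Q :: "int poly"
  assumes QE: "map_poly of_int Q = g * k" and lQ: "lead_coeff Q = 1" and lg: "lead_coeff g = 1"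
  shows "\<exists>G K. map_poly of_int G = g \<and> Q = G * K"
proof -
  obtain r rg where rn: "rat_to_normalized_int_poly g = (r, rg)" by force
  from rat_to_normalized_int_poly[OF rn]
  have g: "g = Polynomial.smult r (map_poly of_int rg)" and r0: "r > 0" by auto
  from rat_to_int_factor_explicit[OF QE rn]
  obtain r' where Qf: "Q = rg * Polynomial.smult (content Q) r'" by blast
  have "lead_coeff rg * lead_coeff (Polynomial.smult (content Q) r') = 1"
    using Qf lQ by (metis lead_coeff_mult)
  hence "lead_coeff rg dvd 1" by (metis dvd_triv_left)
  hence lr: "lead_coeff rg = 1 \<or> lead_coeff rg = -1" by auto
  have "1 = r * of_int (lead_coeff rg)" using lg g r0 by (simp add: lead_coeff_smult)
  hence "lead_coeff rg = 1" using lr r0 by auto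
  hence "r = 1" using \<open>1 = r * of_int (lead_coeff rg)\<close> by simp
  hence "map_poly of_int rg = g" using g by simp
  thus ?thesis using Qf by blast
qed

lemma poly_eq_nz_rat:
  fixes f g :: "rat poly"
  assumes "\<And>x. x \<noteq> 0 \<Longrightarrow> poly f x = poly g x"
  shows "f = g"
proof (rule ccontr)
  assume "f \<noteq> g"
  hence "f - g \<noteq> 0" by simp
  hence fin: "finite {x. poly (f - g) x = 0}" by (rule poly_roots_finite)
  have "UNIV - {0} \<subseteq> {x. poly (f - g) x = 0}" using assms by auto
  hence "finite (UNIV - {0::rat})" using fin finite_subset by blast
  hence "finite (UNIV :: rat set)" by simp
  thus False using infinite_UNIV_char_0 by blast
qed

definition psiP :: "nat \<Rightarrow> rat poly" where
  "psiP s = Polynomial.monom 1 s + (Polynomial.monom (of_nat s) (s-1) - [:(of_nat s - 1)^(s-1):])"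

definition QP :: "nat \<Rightarrow> int poly" where
  "QP s = Polynomial.monom 1 s - [:int (s-1), int s:]"

lemma poly_psiP: "s \<ge> 1 \<Longrightarrow> poly (psiP s) (y::rat) = y^s + of_nat s * y^(s-1) - (of_nat s - 1)^(s-1)"
  unfolding psiP_def by (simp add: poly_monom)

lemma E_psiP: assumes "s \<ge> 1" shows "E (psiP s) z = psi s z"
proof -
  obtain t where st: "s = Suc t" using assms by (cases s) auto
  have "E (psiP s) z = z^s + of_nat s * z^(s-1) - (of_nat s - 1)^(s-1)"
    unfolding psiP_def by (simp add: hom_distribs poly_monom of_rat_diff of_rat_power)
  thus ?thesis unfolding psi_def st by (simp add: distrib_left mult.commute)
qed

lemma degree_psiP: assumes "s \<ge> 2" shows "degree (psiP s) = s"
proof -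
  have "degree (Polynomial.monom (of_nat s :: rat) (s-1) - [:(of_nat s - 1)^(s-1):]) \<le> s - 1"
    by (rule order.trans[OF degree_diff_le_max]) (simp add: degree_monom_le)
  hence "degree (Polynomial.monom (of_nat s :: rat) (s-1) - [:(of_nat s - 1)^(s-1):]) < degree (Polynomial.monom (1::rat) s)"
    using assms by (simp add: degree_monom_eq)
  thus ?thesis unfolding psiP_def by (subst degree_add_eq_left) (simp_all add: degree_monom_eq)
qed

lemma degree_QP: assumes "s \<ge> 2" shows "degree (QP s) = s"
proof -
  have "degree [:int (s-1), int s:] < degree (Polynomial.monom (1::int) s)"
    using assms by (simp add: degree_monom_eq)
  hence "degree (Polynomial.monom (1::int) s + - [:int (s-1), int s:]) = s"
    using assms by (subst degree_add_eq_left) (simp_all add: degree_monom_eq)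
  thus ?thesis unfolding QP_def by (simp only: diff_conv_add_uminus)
qed

lemma lead_QP: assumes "s \<ge> 2" shows "lead_coeff (QP s) = 1"
proof -
  have "Polynomial.coeff [:int (s-1), int s:] s = 0"
    by (rule coeff_eq_0) (use assms in simp)
  thus ?thesis using assms degree_QP[OF assms] unfolding QP_def by simp
qed

lemma coeff0_QP: assumes "s \<ge> 2" shows "Polynomial.coeff (QP s) 0 = - int (s-1)"
  using assms unfolding QP_def by simp

lemma poly_QP: "poly (map_poly (of_int :: int \<Rightarrow> 'a::comm_ring_1) (QP s)) x = x^s - of_nat s * x - of_nat (s-1)"
  unfolding QP_def by (simp add: hom_distribs poly_monom mult.commute)

lemma R_psi:
  assumes s2: "s \<ge> 2" and Tq: "Tq = (of_nat (s-1) :: rat)"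
  shows "reflect_poly (psiP s \<circ>\<^sub>p [:0, Tq:]) = Polynomial.smult (-(Tq^(s-1))) (map_poly of_int (QP s))"
proof (rule poly_eq_nz_rat)
  fix x :: rat assume x0: "x \<noteq> 0"
  define t where "t = s - 1"
  have st: "s = t + 1" using s2 t_def by simp
  have Tq0: "Tq \<noteq> 0" using Tq s2 by simp
  have dg: "degree (psiP s \<circ>\<^sub>p [:0, Tq:]) = s" using Tq0 s2 by (simp add: degree_pcompose degree_psiP)
  have "poly (reflect_poly (psiP s \<circ>\<^sub>p [:0, Tq:])) x = x^s * poly (psiP s) (Tq * inverse x)"
    using x0 dg by (simp add: poly_reflect_poly_nz poly_pcompose mult.commute)
  also have "\<dots> = x^(t+1) * ((Tq/x)^(t+1) + (Tq + 1) * (Tq/x)^t - Tq^t)"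
    using s2 st Tq by (simp add: poly_psiP divide_inverse)
  also have "\<dots> = (x * (Tq/x))^(t+1) + (Tq + 1) * x * (x * (Tq/x))^t - Tq^t * x^(t+1)"
    by (simp only: power_mult_distrib power_add power_one_right algebra_simps)
  also have "x * (Tq/x) = Tq" using x0 by simp
  also have "(Tq)^(t+1) + (Tq + 1) * x * Tq^t - Tq^t * x^(t+1) = Tq^(t+1) + (Tq + 1) * Tq^t * x - Tq^t * x^(t+1)"
    by (simp add: algebra_simps)
  also have "\<dots> = - (Tq^t) * (x^(t+1) - (Tq + 1) * x - Tq)"
    by (simp add: algebra_simps)
  also have "\<dots> = poly (Polynomial.smult (-(Tq^(s-1))) (map_poly of_int (QP s))) x"
    using st Tq by (simp add: poly_QP)
  finally show "poly (reflect_poly (psiP s \<circ>\<^sub>p [:0, Tq:])) x = poly (Polynomial.smult (-(Tq^(s-1))) (map_poly of_int (QP s))) x" .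
qed



theorem mainTheorem19:
  fixes s :: nat and \<alpha> :: complex
  assumes "s \<ge> 3"
    and "psi s \<alpha> = 0"
    and "\<not> trivial_root s \<alpha>"
  shows "\<exists>n :: int. \<bar>n\<bar> \<ge> 2 \<and> n dvd (int s - 1) \<and>
           (\<Prod>\<beta>\<in>conjugates \<alpha>. of_nat s + \<beta>) = of_int (n ^ (s - 1)) \<and>
           of_int n * (\<Prod>\<beta>\<in>conjugates \<alpha>. \<beta>) = of_int ((int s - 1) ^ alg_degree \<alpha>)"
proof -
  note s3 = assms(1)
  define t where "t = s - 1"
  have st: "s = t + 1" and t2: "t \<ge> 2" using s3 t_def by auto
  define Tq :: rat where "Tq = of_nat t"
  define T :: complex where "T = of_nat t"
  have TTq: "T = of_rat Tq" unfolding T_def Tq_def by simp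
  have T0: "T \<noteq> 0" and Tq0: "Tq \<noteq> 0" using t2 T_def Tq_def by auto
  have Ep_rat: "E q (of_rat x) = of_rat (poly q x)" for q x by simp
  have psi_ne: "psiP s \<noteq> 0" using degree_psiP[of s] s3 by auto
  have mp: "is_min_poly \<alpha> (min_poly \<alpha>)"
    using min_poly_exists[OF psi_ne] E_psiP[of s \<alpha>] assms(2) s3 by simp
  define p where "p = min_poly \<alpha>"
  define d where "d = degree p"
  define C where "C = conjugates \<alpha>"
  have mpp: "is_min_poly \<alpha> p" using mp p_def by simp
  have C_def': "C = {\<beta>. E p \<beta> = 0}" unfolding C_def conjugates_def p_def by simp
  have p0: "p \<noteq> 0" and lp: "lead_coeff p = 1" and p\<alpha>: "E p \<alpha> = 0"
    using mpp unfolding is_min_poly_def by auto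
  have \<alpha>C: "\<alpha> \<in> C" using p\<alpha> C_def' by simp
  have d1: "d \<ge> 1" using E_nonconst[OF p0 p\<alpha>] d_def by simp
  have "p dvd psiP s" using min_poly_dvd[OF mpp] E_psiP[of s \<alpha>] assms(2) s3 by simp
  then obtain h where ph: "psiP s = p * h" by (elim dvdE)
  have Cpsi: "psi s \<beta> = 0" if "\<beta> \<in> C" for \<beta>
  proof -
    have "E (psiP s) \<beta> = E p \<beta> * E h \<beta>" unfolding ph by (rule E_mult)
    thus ?thesis using that C_def' E_psiP[of s \<beta>] s3 by simp
  qed
  have psiexp: "\<beta>^t * (\<beta> + of_nat s) = T^t" if "psi s \<beta> = 0" for \<beta>
    using that s3 unfolding psi_def T_def t_def by (simp add: of_nat_diff)
  have C0: "\<beta> \<noteq> 0" if "\<beta> \<in> C" for \<beta>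
  proof
    assume "\<beta> = 0"
    hence "T^t = 0" using psiexp[OF Cpsi[OF that]] t2 by (simp add: power_0_left)
    thus False using T0 by simp
  qed
  have rsq: "rsquarefree (map_poly (of_rat :: rat \<Rightarrow> complex) p)" by (rule min_poly_rsquarefree[OF mpp])
  have lP: "lead_coeff (map_poly (of_rat :: rat \<Rightarrow> complex) p) = 1" using lp by simp
  have "Polynomial.smult (lead_coeff (map_poly (of_rat :: rat \<Rightarrow> complex) p))
      (\<Prod>z | poly (map_poly of_rat p) z = 0. [:-z, 1:]) = map_poly of_rat p"
    by (rule complex_poly_decompose_rsquarefree[OF rsq])
  hence "map_poly of_rat p = (\<Prod>z | poly (map_poly (of_rat :: rat \<Rightarrow> complex) p) z = 0. [:-z, 1:])"
    using lP by simp
  hence Pfact: "map_poly of_rat p = (\<Prod>\<beta>\<in>C. [:-\<beta>, 1:])" unfolding C_def' by simp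
  have P0: "map_poly (of_rat :: rat \<Rightarrow> complex) p \<noteq> 0" using p0 by simp
  have finC: "finite C" unfolding C_def' using poly_roots_finite[OF P0] by simp
  have "degree (map_poly (of_rat :: rat \<Rightarrow> complex) p) = d" unfolding d_def by simp
  hence cardC: "card C = d" unfolding Pfact by (simp add: degree_prod_sum_eq)
  have EpZ: "E p z = (\<Prod>\<beta>\<in>C. z - \<beta>)" for z unfolding Pfact poly_prod
    by (rule prod.cong) simp_all
  define c0 where "c0 = poly p 0"
  have Ec0: "E p 0 = of_rat c0" using Ep_rat[of p 0] c0_def by simp
  have neg_prod: "(\<Prod>\<beta>\<in>C. - f \<beta>) = (-1)^d * (\<Prod>\<beta>\<in>C. f \<beta>)" for f :: "complex \<Rightarrow> complex"
  proof -
    have "(\<Prod>\<beta>\<in>C. - f \<beta>) = (\<Prod>\<beta>\<in>C. (-1) * f \<beta>)" by simp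
    also have "\<dots> = (\<Prod>\<beta>\<in>C. -1) * (\<Prod>\<beta>\<in>C. f \<beta>)" by (rule prod.distrib)
    also have "(\<Prod>\<beta>\<in>C. (-1::complex)) = (-1)^card C" by (rule prod_constant)
    finally show ?thesis using cardC by simp
  qed
  have prodC: "(\<Prod>\<beta>\<in>C. \<beta>) = (-1)^d * of_rat c0"
  proof -
    have "of_rat c0 = (\<Prod>\<beta>\<in>C. - \<beta>)" using EpZ[of 0] Ec0 by simp
    also have "\<dots> = (-1)^d * (\<Prod>\<beta>\<in>C. \<beta>)" by (rule neg_prod)
    finally have "of_rat c0 = (-1)^d * (\<Prod>\<beta>\<in>C. \<beta>)" .
    thus ?thesis by (cases "even d") simp_all
  qed
  have c0nz: "c0 \<noteq> 0"
  proof
    assume "c0 = 0"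
    hence "E p 0 = 0" using Ec0 by simp
    hence "0 \<in> C" using C_def' by simp
    thus False using C0 by blast
  qed
  have mT: "-T \<notin> C"
  proof
    assume mTC: "-T \<in> C"
    have "E [:Tq, 1:] (-T) = 0" using TTq by (simp add: hom_distribs)
    hence "degree [:Tq, 1:] \<ge> d" using conj_min_degree[OF mpp, of "-T" "[:Tq,1:]"] mTC C_def' d_def by simp
    hence "d = 1" using d1 by simp
    hence "card C = 1" using cardC by simp
    then obtain x where "C = {x}" by (rule card_1_singletonE)
    hence \<alpha>T: "\<alpha> = -T" using \<alpha>C mTC by simp
    have e0: "\<alpha>^t * (\<alpha> + of_nat s) = T^t" using psiexp[OF assms(2)] .
    have e1: "\<alpha> + of_nat s = 1" unfolding \<alpha>T T_def st by simp
    have "(-T)^t = T^t" using e0 e1 \<alpha>T by simp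
    moreover have "(-T)^t = (-1)^t * T^t" by (rule power_minus)
    ultimately have "(-1)^t * T^t = T^t" by simp
    moreover have "T^t \<noteq> 0" using T0 by simp
    ultimately have "(-1::complex)^t = 1" by (metis mult_cancel_right2)
    have "even t"
    proof (rule ccontr)
      assume "odd t"
      hence "(-1::complex)^t = -1" by simp
      thus False using \<open>(-1::complex)^t = 1\<close> by simp
    qed
    hence "odd s" using st by simp
    moreover have "\<alpha> = 1 - of_nat s" using \<alpha>T st T_def by simp
    ultimately show False using assms(3) unfolding trivial_root_def by simp
  qed
  define Rp where "Rp = reflect_poly (p \<circ>\<^sub>p [:0, Tq:])"
  define Rh where "Rh = reflect_poly (h \<circ>\<^sub>p [:0, Tq:])"
  have s2: "s \<ge> 2" using s3 by simp
  have "reflect_poly (psiP s \<circ>\<^sub>p [:0, Tq:]) = Rp * Rh"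
    unfolding ph Rp_def Rh_def by (simp add: pcompose_mult reflect_poly_mult)
  hence RR: "Polynomial.smult (-(Tq^t)) (map_poly of_int (QP s)) = Rp * Rh"
    using R_psi[OF s2, of Tq] Tq_def t_def by simp
  have dpc: "degree (p \<circ>\<^sub>p [:0, Tq:]) = d" using Tq0 d_def by (simp add: degree_pcompose)
  have c0pc: "Polynomial.coeff (p \<circ>\<^sub>p [:0, Tq:]) 0 = c0"
    unfolding c0_def by (simp add: poly_0_coeff_0[symmetric] poly_pcompose)
  have lRp: "lead_coeff Rp = c0"
  proof -
    have "degree Rp = d" unfolding Rp_def using c0pc c0nz dpc by simp
    thus ?thesis unfolding Rp_def using dpc c0pc by (simp add: coeff_reflect_poly)
  qed
  define g where "g = Polynomial.smult (1/c0) Rp"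
  have lg: "lead_coeff g = 1" unfolding g_def using lRp c0nz by (simp add: lead_coeff_smult)
  define k where "k = Polynomial.smult (c0 / (-(Tq^t))) Rh"
  have Qgk: "map_poly of_int (QP s) = g * k"
  proof -
    have "g * k = Polynomial.smult (1/c0 * (c0 / (-(Tq^t)))) (Rp * Rh)"
      unfolding g_def k_def by (simp add: mult_smult_left mult_smult_right)
    also have "\<dots> = Polynomial.smult (1/c0 * (c0 / (-(Tq^t)))) (Polynomial.smult (-(Tq^t)) (map_poly of_int (QP s)))"
      using RR by simp
    also have "\<dots> = map_poly of_int (QP s)"
    proof -
      have "1/c0 * (c0 / (-(Tq^t))) * (-(Tq^t)) = 1" using c0nz Tq0 by (simp add: field_simps)
      thus ?thesis by (simp add: smult_smult)
    qed
    finally show ?thesis by simp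
  qed
  obtain G K where Gg: "map_poly of_int G = g" and QGK: "QP s = G * K"
    using monic_factor_int[OF Qgk lead_QP[OF s2] lg] by auto
  define G0 where "G0 = Polynomial.coeff G 0"
  have G0q: "of_int G0 = Tq^d / c0"
  proof -
    have "of_int G0 = Polynomial.coeff g 0" unfolding G0_def Gg[symmetric] by simp
    also have "\<dots> = (1/c0) * lead_coeff (p \<circ>\<^sub>p [:0, Tq:])" unfolding g_def Rp_def by simp
    also have "lead_coeff (p \<circ>\<^sub>p [:0, Tq:]) = Tq^d"
    proof -
      have "lead_coeff (p \<circ>\<^sub>p [:0, Tq:]) = lead_coeff p * lead_coeff [:0, Tq:] ^ degree p"
        by (rule lead_coeff_comp) (use Tq0 in simp)
      thus ?thesis using lp Tq0 d_def by simp
    qed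
    finally show ?thesis by simp
  qed
  have G0dvd: "G0 dvd int t"
  proof -
    have "Polynomial.coeff (QP s) 0 = G0 * Polynomial.coeff K 0" unfolding QGK G0_def by (simp add: coeff_mult_0)
    hence "- int t = G0 * Polynomial.coeff K 0" using coeff0_QP[of s] s3 t_def by simp
    hence "int t = G0 * (- Polynomial.coeff K 0)" by simp
    thus ?thesis by (rule dvdI)
  qed
  define n where "n = (-1)^d * G0"
  define Gm1 where "Gm1 = poly G (-1)"
  have Gm1q: "of_int Gm1 = (1/c0) * (-1)^d * poly p (-Tq)"
  proof -
    have "of_int Gm1 = poly g (-1)" unfolding Gm1_def Gg[symmetric] by (metis of_int_hom.poly_map_poly of_int_1 of_int_minus)
    also have "\<dots> = (1/c0) * poly Rp (-1)" unfolding g_def by simp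
    also have "poly Rp (-1) = (-1)^d * poly p (-Tq)"
      unfolding Rp_def using dpc by (simp add: poly_reflect_poly_nz poly_pcompose)
    finally show ?thesis by simp
  qed
  have B: "E p (-T) = of_rat (poly p (-Tq))" unfolding TTq of_rat_minus[symmetric] by (rule Ep_rat)
  have Gm1nz: "Gm1 \<noteq> 0"
  proof
    assume "Gm1 = 0"
    hence "poly p (-Tq) = 0" using Gm1q c0nz by simp
    hence "E p (-T) = 0" using B by simp
    thus False using mT C_def' by simp
  qed
  define U where "U = (\<lambda>\<beta>. T / \<beta>) ` C"
  have injU: "inj_on (\<lambda>\<beta>. T / \<beta>) C"
    by (rule inj_onI) (use T0 C0 in \<open>auto simp: field_simps\<close>)
  have finU: "finite U" using finC U_def by simp
  have neU: "U \<noteq> {}" using \<alpha>C U_def by auto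
  have sb: "of_nat s + \<beta> = (T/\<beta>)^t" if "\<beta> \<in> C" for \<beta>
  proof -
    have "\<beta>^t * (\<beta> + of_nat s) = T^t" using psiexp[OF Cpsi[OF that]] .
    thus ?thesis using C0[OF that] by (simp add: power_divide field_simps)
  qed
  have rootU: "u^s = of_nat s * u + of_nat (s-1)" if uU: "u \<in> U" for u
  proof -
    obtain \<beta> where b: "\<beta> \<in> C" and u: "u = T / \<beta>" using uU U_def by auto
    have "u^s = of_nat s * u + T" by (rule root_step[OF u sb[OF b] st C0[OF b]])
    thus ?thesis using T_def t_def by simp
  qed
  have m1U: "-1 \<notin> U"
  proof
    assume "-1 \<in> U"
    then obtain \<beta> where b: "\<beta> \<in> C" and u: "-1 = T / \<beta>" using U_def by auto
    hence "-\<beta> = T" using C0[OF b] by (simp add: field_simps)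
    hence "\<beta> = -T" by (metis minus_minus)
    thus False using b mT by simp
  qed
  have prodTb: "(\<Prod>\<beta>\<in>C. T / \<beta>) = of_int n"
  proof -
    have "(\<Prod>\<beta>\<in>C. T / \<beta>) = T^d / (\<Prod>\<beta>\<in>C. \<beta>)" using cardC by (simp add: prod_dividef)
    also have "\<dots> = (-1)^d * (T^d / of_rat c0)" unfolding prodC
      by (cases "even d") simp_all
    also have "\<dots> = (-1)^d * of_rat (Tq^d / c0)" unfolding TTq
      by (simp add: of_rat_divide of_rat_power)
    also have "\<dots> = of_int n" unfolding n_def G0q[symmetric] by simp
    finally show ?thesis .
  qed
  have prodU: "(\<Prod>u\<in>U. u) = of_int n" unfolding U_def using prod.reindex[OF injU, of "\<lambda>u. u"] prodTb by simp
  have A: "(\<Prod>\<beta>\<in>C. \<beta> + T) = (-1)^d * E p (-T)"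
  proof -
    have "(\<Prod>\<beta>\<in>C. \<beta> + T) = (\<Prod>\<beta>\<in>C. - ((-T) - \<beta>))" by (rule prod.cong) simp_all
    also have "\<dots> = (-1)^d * (\<Prod>\<beta>\<in>C. (-T) - \<beta>)" by (rule neg_prod)
    also have "(\<Prod>\<beta>\<in>C. (-T) - \<beta>) = E p (-T)" using EpZ[of "-T"] by simp
    finally show ?thesis .
  qed
  have X: "poly p (-Tq) = c0 * (-1)^d * of_int Gm1"
    using Gm1q c0nz by (cases "even d") (simp_all add: field_simps)
  have prod1U: "(\<Prod>u\<in>U. 1 + u) = (-1)^d * of_int Gm1"
  proof -
    have "(\<Prod>u\<in>U. 1 + u) = (\<Prod>\<beta>\<in>C. 1 + T / \<beta>)" unfolding U_def using prod.reindex[OF injU, of "\<lambda>u. 1 + u"] by simp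
    also have "\<dots> = (\<Prod>\<beta>\<in>C. (\<beta> + T) / \<beta>)" by (rule prod.cong) (simp_all add: C0 field_simps)
    also have "\<dots> = (\<Prod>\<beta>\<in>C. \<beta> + T) / (\<Prod>\<beta>\<in>C. \<beta>)" by (simp add: prod_dividef)
    also have "\<dots> = ((-1)^d * of_rat (c0 * (-1)^d * of_int Gm1)) / ((-1)^d * of_rat c0)"
      unfolding A B X prodC ..
    also have "\<dots> = (-1)^d * of_int Gm1" using c0nz
      by (cases "even d") (simp_all add: of_rat_mult of_rat_minus)
    finally show ?thesis .
  qed
  have n0: "n \<noteq> 0" using G0q c0nz Tq0 n_def by auto
  have n2: "\<bar>n\<bar> \<ge> 2"
  proof (rule ccontr)
    assume "\<not> \<bar>n\<bar> \<ge> 2"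
    hence "\<bar>n\<bar> = 1" using n0 by arith
    hence "norm (\<Prod>u\<in>U. u) = 1" unfolding prodU by (metis norm_of_int of_int_1 of_int_abs)
    moreover have "norm (\<Prod>u\<in>U. 1 + u) \<ge> 1"
    proof -
      have "norm (\<Prod>u\<in>U. 1 + u) = \<bar>of_int Gm1\<bar>" unfolding prod1U by (simp add: norm_mult norm_power)
      moreover have "\<bar>Gm1\<bar> \<ge> 1" using Gm1nz by arith
      ultimately show ?thesis by simp
    qed
    ultimately show False using no_unit[OF s3 finU neU rootU m1U] by blast
  qed
  have ndvd: "n dvd (int s - 1)"
  proof -
    have "int s - 1 = int t" using st by simp
    moreover have "n dvd G0" unfolding n_def by (cases "even d") auto
    ultimately show ?thesis using G0dvd dvd_trans by metis
  qed
  have M: "(\<Prod>\<beta>\<in>C. of_nat s + \<beta>) = of_int (n ^ (s - 1))"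
  proof -
    have "(\<Prod>\<beta>\<in>C. of_nat s + \<beta>) = (\<Prod>\<beta>\<in>C. (T/\<beta>)^t)" using sb by (intro prod.cong) auto
    also have "\<dots> = (of_int n)^t" using prodTb by (simp add: prod_power_distrib[symmetric])
    finally show ?thesis using t_def by simp
  qed
  have N: "of_int n * (\<Prod>\<beta>\<in>C. \<beta>) = of_int ((int s - 1) ^ alg_degree \<alpha>)"
  proof -
    have "of_int n * (\<Prod>\<beta>\<in>C. \<beta>) = (\<Prod>\<beta>\<in>C. T / \<beta> * \<beta>)" unfolding prodTb[symmetric] by (rule prod.distrib[symmetric])
    also have "\<dots> = (\<Prod>\<beta>\<in>C. T)" by (rule prod.cong) (simp_all add: C0)
    also have "\<dots> = T^d" using cardC by simp
    also have "\<dots> = of_int ((int s - 1) ^ alg_degree \<alpha>)"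
      unfolding alg_degree_def p_def[symmetric] d_def[symmetric] T_def using st by simp
    finally show ?thesis .
  qed
  show ?thesis using n2 ndvd M N unfolding C_def by blast
qed

end
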